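(* Let $\mathcal{X}$ be a finite set with $|\mathcal{X}|=n$, and let $s,t\ge 0$ be integers with $s+t\le n$. Generate random subsets $\mathcal{T},\mathcal{S}\subseteq\mathcal{X}$ as follows: (0) draw $\mathcal{L}\subseteq\mathcal{X}$ of size $t+s$ uniformly at random without replacement; (1) draw $\mathcal{T}\subseteq\mathcal{L}$ of size $t$ uniformly at random without replacement from $\mathcal{L}$; (2) draw an integer $i$ from the hypergeometric distribution with population size $n$, $t$ success states and $s$ draws, i.e. $\Pr\{i\}=\binom{t}{i}\binom{n-t}{s-i}/\binom{n}{s}$; (3) draw $i$ elements uniformly at random without replacement from $\mathcal{T}$; (4) draw $s-i$ elements uniformly at random without replacement from $\mathcal{L}\setminus\mathcal{T}$; (5) let $\mathcal{S}$ be the union of the elements drawn in steps (3) and (4). Then $\Pr\{\mathcal{T}=T\}=1/\binom{n}{t}$ for every $t$-subset $T\subseteq\mathcal{X}$, and $\Pr\{\mathcal{S}=S\mid\mathcal{T}=T\}=1/\binom{n}{s}$ for every $s$-subset $S$ and $t$-subset $T$ of $\mathcal{X}$; that is, $(\mathcal{T},\mathcal{S})$ has the same joint distribution as a pair of independent samples of sizes $t$ and $s$, each drawn uniformly at random without replacement from $\mathcal{X}$. *)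

theory Defs
  imports "HOL-Probability.Probability"
begin

definition uniform_subset :: "nat \<Rightarrow> 'a set \<Rightarrow> 'a set pmf" where
  "uniform_subset k A = pmf_of_set {B. B \<subseteq> A \<and> card B = k}"

definition hypergeometric_pmf :: "nat \<Rightarrow> nat \<Rightarrow> nat \<Rightarrow> nat pmf" where
  "hypergeometric_pmf N K m = embed_pmf (\<lambda>i. if i \<le> m then
      real (K choose i) * real ((N - K) choose (m - i)) / real (N choose m) else 0)"

definition sample_TS :: "'a set \<Rightarrow> nat \<Rightarrow> nat \<Rightarrow> ('a set \<times> 'a set) pmf" where
  "sample_TS X t s = do {
     L \<leftarrow> uniform_subset (t + s) X;
     T \<leftarrow> uniform_subset t L;
     i \<leftarrow> hypergeometric_pmf (card X) t s;
     A \<leftarrow> uniform_subset i T;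
     B \<leftarrow> uniform_subset (s - i) (L - T);
     return_pmf (T, A \<union> B) }"

end

theory Submission
  imports Defs
begin


abbreviation subs where "subs k A \<equiv> {B. B \<subseteq> A \<and> card B = k}"

lemma subs_finite: "finite A \<Longrightarrow> finite (subs k A)"
  by (rule finite_subset[of _ "Pow A"]) auto

lemma subs_card: "finite A \<Longrightarrow> card (subs k A) = card A choose k"
  using n_subsets by blast

lemma subs_ne: "finite A \<Longrightarrow> k \<le> card A \<Longrightarrow> subs k A \<noteq> {}"
  using subs_card[of A k] by (metis card.empty zero_less_binomial_iff less_numeral_extra(3))

lemma sigma_pmf:
  assumes "finite A" "A \<noteq> {}" "\<And>x. x \<in> A \<Longrightarrow> finite (B x) \<and> B x \<noteq> {} \<and> card (B x) = c"
  shows "bind_pmf (pmf_of_set A) (\<lambda>x. map_pmf (Pair x) (pmf_of_set (B x))) = pmf_of_set (Sigma A B)"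
proof -
  have e: "Sigma A B = (\<Union>x\<in>A. Pair x ` B x)" by auto
  have "pmf_of_set (\<Union>x\<in>A. Pair x ` B x) = do {x \<leftarrow> pmf_of_set A; pmf_of_set (Pair x ` B x)}"
    apply (rule pmf_of_set_UN[where n=c])
    using assms by (auto simp: card_image inj_on_def disjoint_family_on_def)
  also have "\<dots> = bind_pmf (pmf_of_set A) (\<lambda>x. map_pmf (Pair x) (pmf_of_set (B x)))"
    apply (rule bind_pmf_cong[OF refl])
    using assms by (subst map_pmf_of_set_inj) (auto simp: inj_on_def)
  finally show ?thesis using e by simp
qed

lemma supersets_card:
  assumes "finite X" "B \<subseteq> X" "card B = k" and True: "k \<le> m"
  shows "card {L. L \<subseteq> X \<and> card L = m \<and> B \<subseteq> L} = (card X - k) choose (m - k)"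
proof -
  have "{L. L \<subseteq> X \<and> card L = m \<and> B \<subseteq> L} = (\<lambda>R. R \<union> B) ` subs (m - k) (X - B)"
  proof (rule set_eqI, rule iffI)
    fix L assume "L \<in> {L. L \<subseteq> X \<and> card L = m \<and> B \<subseteq> L}"
    then have L: "L \<subseteq> X" "card L = m" "B \<subseteq> L" by auto
    have fL: "finite L" using assms L finite_subset by blast
    have "L = (L - B) \<union> B" "L - B \<subseteq> X - B" using L by auto
    moreover have "card (L - B) = m - k" using L assms fL card_Diff_subset[of B L] finite_subset[of B L] by auto
    ultimately show "L \<in> (\<lambda>R. R \<union> B) ` subs (m - k) (X - B)" by blast
  next
    fix L assume "L \<in> (\<lambda>R. R \<union> B) ` subs (m - k) (X - B)"
    then obtain R where R: "R \<subseteq> X - B" "card R = m - k" "L = R \<union> B" by auto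
    have "finite R" using R(1) assms finite_subset by blast
    moreover have "finite B" using assms finite_subset by blast
    ultimately have "card (R \<union> B) = m" using assms True R
      by (subst card_Un_disjoint) auto
    then show "L \<in> {L. L \<subseteq> X \<and> card L = m \<and> B \<subseteq> L}" using R assms by auto
  qed
  also have "card \<dots> = card (subs (m - k) (X - B))"
    by (rule card_image) (auto simp: inj_on_def)
  also have "\<dots> = (card X - k) choose (m - k)"
    using assms by (simp add: subs_card card_Diff_subset finite_subset)
  finally show ?thesis .
qed

lemma two_stage:
  assumes "finite X" "k \<le> m" "m \<le> card X"
  shows "bind_pmf (uniform_subset m X) (\<lambda>L. uniform_subset k L) = uniform_subset k X"
proof (rule pmf_eqI)
  fix B
  have fin: "finite (subs m X)" using assms by (simp add: subs_finite)
  have ne: "subs m X \<noteq> {}" using assms subs_ne by blast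
  have "pmf (bind_pmf (uniform_subset m X) (\<lambda>L. uniform_subset k L)) B
     = (\<Sum>L\<in>subs m X. pmf (uniform_subset k L) B) / real (card X choose m)"
    unfolding uniform_subset_def[of m] using fin ne assms
    by (subst pmf_bind_pmf_of_set) (auto simp: subs_card)
  also have "(\<Sum>L\<in>subs m X. pmf (uniform_subset k L) B)
      = (\<Sum>L\<in>subs m X. if B \<subseteq> L \<and> card B = k then 1 / real (m choose k) else 0)"
  proof (rule sum.cong[OF refl])
    fix L assume L: "L \<in> subs m X"
    then have "finite L" using assms finite_subset by blast
    then show "pmf (uniform_subset k L) B = (if B \<subseteq> L \<and> card B = k then 1 / real (m choose k) else 0)"
      unfolding uniform_subset_def using L assms subs_ne[of L k]
      by (subst pmf_of_set) (auto simp: subs_card subs_finite indicator_def)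
  qed
  also have "\<dots> = (if B \<subseteq> X \<and> card B = k then real (card {L. L \<subseteq> X \<and> card L = m \<and> B \<subseteq> L}) / real (m choose k) else 0)"
  proof (cases "B \<subseteq> X \<and> card B = k")
    case True
    have e: "subs m X \<inter> {L. B \<subseteq> L \<and> card B = k} = {L. L \<subseteq> X \<and> card L = m \<and> B \<subseteq> L}"
      using True by auto
    have "(\<Sum>L\<in>subs m X. if B \<subseteq> L \<and> card B = k then 1 / real (m choose k) else 0)
       = real (card (subs m X \<inter> {L. B \<subseteq> L \<and> card B = k})) * (1 / real (m choose k))"
      by (subst sum.If_cases[OF fin]) simp
    moreover have e2: "subs m X \<inter> {L. B \<subseteq> L} = {L. L \<subseteq> X \<and> card L = m \<and> B \<subseteq> L}"
      by auto
    ultimately show ?thesis using True by (simp add: e2)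
  next
    case False
    have "(\<Sum>L\<in>subs m X. if B \<subseteq> L \<and> card B = k then 1 / real (m choose k) else 0) = 0"
      by (rule sum.neutral) (use False in auto)
    then show ?thesis using False by (simp only:) simp
  qed
  also have "\<dots> / real (card X choose m) = pmf (uniform_subset k X) B"
  proof (cases "B \<subseteq> X \<and> card B = k")
    case True
    have cm: "(card X choose m) * (m choose k) = (card X choose k) * ((card X - k) choose (m - k))"
      using choose_mult assms by blast
    have pos: "(card X choose m) > 0" "(m choose k) > 0" using assms by auto
    have "real (card X choose m) * real (m choose k) = real (card X choose k) * real ((card X - k) choose (m - k))"
      using cm by (metis of_nat_mult)
    then show ?thesis using True assms pos
      unfolding uniform_subset_def
      by (subst pmf_of_set) (auto simp: supersets_card subs_card subs_finite subs_ne indicator_def field_simps)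
  next
    case False
    have "subs k X \<noteq> {}" using assms subs_ne[of X k] by simp
    then show ?thesis unfolding uniform_subset_def using assms False
      by (subst pmf_of_set) (auto simp: subs_finite indicator_def)
  qed
  finally show "pmf (bind_pmf (uniform_subset m X) (\<lambda>L. uniform_subset k L)) B = pmf (uniform_subset k X) B" .
qed

lemma pmf_hyp:
  assumes "s \<le> n" "t \<le> n"
  shows "pmf (hypergeometric_pmf n t s) i = (if i \<le> s then real (t choose i) * real ((n - t) choose (s - i)) / real (n choose s) else 0)"
proof -
  define f where "f = (\<lambda>i. if i \<le> s then real (t choose i) * real ((n - t) choose (s - i)) / real (n choose s) else 0)"
  have nn: "\<And>i. 0 \<le> f i" unfolding f_def by auto
  have "(\<integral>\<^sup>+x. ennreal (f x) \<partial>count_space UNIV) = (\<Sum>x\<in>{..s}. ennreal (f x))"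
    by (rule nn_integral_count_space') (auto simp: f_def)
  also have "\<dots> = ennreal (\<Sum>x\<in>{..s}. f x)" using nn by (rule sum_ennreal)
  also have "(\<Sum>x\<in>{..s}. f x) = (\<Sum>x\<le>s. real (t choose x) * real ((n - t) choose (s - x)) / real (n choose s))"
    by (rule sum.cong) (auto simp: f_def)
  also have "\<dots> = (\<Sum>x\<le>s. real (t choose x) * real ((n - t) choose (s - x))) / real (n choose s)"
    by (rule sum_divide_distrib[symmetric])
  also have "(\<Sum>x\<le>s. real (t choose x) * real ((n - t) choose (s - x))) = real (n choose s)"
  proof -
    have h: "(\<Sum>x\<le>s. (t choose x) * ((n - t) choose (s - x))) = n choose s"
      using vandermonde[of t "n-t" s] assms by simp
    show ?thesis unfolding of_nat_mult[symmetric] of_nat_sum[symmetric] h ..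
  qed
  also have "real (n choose s) / real (n choose s) = 1" using assms by simp
  finally have one: "(\<integral>\<^sup>+x. ennreal (f x) \<partial>count_space UNIV) = 1" by simp
  have "hypergeometric_pmf n t s = embed_pmf f" unfolding hypergeometric_pmf_def f_def ..
  then show ?thesis using pmf_embed_pmf[OF nn one, of i] unfolding f_def by simp
qed

lemma pairs:
  assumes "finite X" "card X = n" "s + t \<le> n"
  shows "bind_pmf (uniform_subset (t+s) X) (\<lambda>L. map_pmf (Pair L) (uniform_subset t L))
    = map_pmf (\<lambda>(T,R). (T \<union> R, T)) (bind_pmf (uniform_subset t X) (\<lambda>T. map_pmf (Pair T) (uniform_subset s (X - T))))"
proof -
  have "bind_pmf (uniform_subset (t+s) X) (\<lambda>L. map_pmf (Pair L) (uniform_subset t L))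
      = pmf_of_set (Sigma (subs (t+s) X) (\<lambda>L. subs t L))"
    unfolding uniform_subset_def
  proof (rule sigma_pmf[where c = "(t+s) choose t"])
    fix L assume L: "L \<in> subs (t+s) X"
    then have "finite L" using assms finite_subset by blast
    then show "finite (subs t L) \<and> subs t L \<noteq> {} \<and> card (subs t L) = (t+s) choose t"
      using L subs_ne[of L t] by (auto simp: subs_finite subs_card)
  qed (use assms subs_ne[of X "t+s"] in \<open>auto simp: subs_finite\<close>)
  moreover have "bind_pmf (uniform_subset t X) (\<lambda>T. map_pmf (Pair T) (uniform_subset s (X - T)))
      = pmf_of_set (Sigma (subs t X) (\<lambda>T. subs s (X - T)))"
    unfolding uniform_subset_def
  proof (rule sigma_pmf[where c = "(n - t) choose s"])
    fix T assume T: "T \<in> subs t X"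
    then have "card (X - T) = n - t" using assms card_Diff_subset[of T X] finite_subset[of T X] by auto
    then show "finite (subs s (X - T)) \<and> subs s (X - T) \<noteq> {} \<and> card (subs s (X - T)) = (n - t) choose s"
      using assms subs_ne[of "X - T" s] by (auto simp: subs_finite subs_card)
  qed (use assms subs_ne[of X t] in \<open>auto simp: subs_finite\<close>)
  moreover have "map_pmf (\<lambda>(T,R). (T \<union> R, T)) (pmf_of_set (Sigma (subs t X) (\<lambda>T. subs s (X - T))))
      = pmf_of_set ((\<lambda>(T,R). (T \<union> R, T)) ` Sigma (subs t X) (\<lambda>T. subs s (X - T)))"
  proof (rule map_pmf_of_set_inj)
    show "inj_on (\<lambda>(T, R). (T \<union> R, T)) (SIGMA T:subs t X. subs s (X - T))"
      by (auto simp: inj_on_def)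
    show "(SIGMA T:subs t X. subs s (X - T)) \<noteq> {}"
    proof -
      obtain T where T: "T \<in> subs t X" using subs_ne[of X t] assms by auto
      then have "card (X - T) = n - t" using assms card_Diff_subset[of T X] finite_subset[of T X] by auto
      moreover have "finite (X - T)" using assms by simp
      ultimately have "subs s (X - T) \<noteq> {}" using subs_ne[of "X - T" s] assms by simp
      then obtain R where "R \<in> subs s (X - T)" by blast
      then show ?thesis using T by auto
    qed
    show "finite (SIGMA T:subs t X. subs s (X - T))" using assms by (auto simp: subs_finite)
  qed
  moreover have "(\<lambda>(T,R). (T \<union> R, T)) ` Sigma (subs t X) (\<lambda>T. subs s (X - T)) = Sigma (subs (t+s) X) (\<lambda>L. subs t L)"
  proof (rule set_eqI, rule iffI)
    fix p assume "p \<in> (\<lambda>(T,R). (T \<union> R, T)) ` Sigma (subs t X) (\<lambda>T. subs s (X - T))"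
    then obtain T R where TR: "T \<subseteq> X" "card T = t" "R \<subseteq> X - T" "card R = s" "p = (T \<union> R, T)" by auto
    have "finite T" "finite R" using TR assms finite_subset by (metis Diff_subset subset_trans)+
    then have "card (T \<union> R) = t + s" using TR by (subst card_Un_disjoint) auto
    then show "p \<in> Sigma (subs (t+s) X) (\<lambda>L. subs t L)" using TR by auto
  next
    fix p assume "p \<in> Sigma (subs (t+s) X) (\<lambda>L. subs t L)"
    then obtain L T where LT: "L \<subseteq> X" "card L = t + s" "T \<subseteq> L" "card T = t" "p = (L, T)" by auto
    have "finite L" using LT assms finite_subset by metis
    then have "card (L - T) = s" using LT card_Diff_subset[of T L] finite_subset[of T L] by auto
    moreover have "p = (\<lambda>(T,R). (T \<union> R, T)) (T, L - T)" using LT by auto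
    moreover have "(T, L - T) \<in> Sigma (subs t X) (\<lambda>T. subs s (X - T))" using LT \<open>card (L - T) = s\<close> by auto
    ultimately show "p \<in> (\<lambda>(T,R). (T \<union> R, T)) ` Sigma (subs t X) (\<lambda>T. subs s (X - T))"
      using image_eqI by (metis (no_types, lifting))
  qed
  ultimately show ?thesis by (simp only:)
qed



lemma card_split:
  assumes "finite S" shows "card (S \<inter> T) + card (S - T) = card S"
proof -
  have "S = (S \<inter> T) \<union> (S - T)" by auto
  then have "card S = card ((S \<inter> T) \<union> (S - T))" by simp
  also have "\<dots> = card (S \<inter> T) + card (S - T)" using assms by (intro card_Un_disjoint) auto
  finally show ?thesis by simp
qed

lemma inner_pmf:
  assumes "finite X" "card X = n" "T \<subseteq> X" "card T = t" "i \<le> t" "s - i \<le> n - t"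
  defines "Q \<equiv> {S. S \<subseteq> X \<and> card (S \<inter> T) = i \<and> card (S - T) = s - i}"
  shows "bind_pmf (uniform_subset i T) (\<lambda>A. map_pmf (\<lambda>B. A \<union> B) (uniform_subset (s - i) (X - T)))
     = pmf_of_set Q" and "card Q = (t choose i) * ((n - t) choose (s - i))"
proof -
  have fT: "finite T" using assms finite_subset by blast
  have cXT: "card (X - T) = n - t" using assms card_Diff_subset[of T X] fT by simp
  have ne1: "subs i T \<noteq> {}" using subs_ne[of T i] fT assms by simp
  have ne2: "subs (s - i) (X - T) \<noteq> {}" using subs_ne[of "X - T" "s - i"] cXT assms by simp
  define P where "P = subs i T \<times> subs (s - i) (X - T)"
  have fP: "finite P" unfolding P_def using fT assms by (simp add: subs_finite)
  have neP: "P \<noteq> {}" unfolding P_def using ne1 ne2 by simp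
  have inj: "inj_on (\<lambda>(A, B). A \<union> B) P"
  proof (rule inj_onI, clarify)
    fix A B A' B' assume "(A, B) \<in> P" "(A', B') \<in> P" "A \<union> B = A' \<union> B'"
    then have "A = (A \<union> B) \<inter> T" "A' = (A' \<union> B') \<inter> T" "B = (A \<union> B) - T" "B' = (A' \<union> B') - T"
      unfolding P_def by auto
    then show "A = A' \<and> B = B'" using \<open>A \<union> B = A' \<union> B'\<close> by metis
  qed
  have img: "(\<lambda>(A, B). A \<union> B) ` P = Q"
  proof (rule set_eqI, rule iffI)
    fix S assume "S \<in> (\<lambda>(A, B). A \<union> B) ` P"
    then obtain A B where AB: "A \<subseteq> T" "card A = i" "B \<subseteq> X - T" "card B = s - i" "S = A \<union> B"
      unfolding P_def by auto
    then have "S \<inter> T = A" "S - T = B" by auto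
    then show "S \<in> Q" using AB assms unfolding Q_def by auto
  next
    fix S assume "S \<in> Q"
    then have "(S \<inter> T, S - T) \<in> P" "S = (\<lambda>(A, B). A \<union> B) (S \<inter> T, S - T)"
      unfolding Q_def P_def by auto
    then show "S \<in> (\<lambda>(A, B). A \<union> B) ` P" by blast
  qed
  have "bind_pmf (uniform_subset i T) (\<lambda>A. map_pmf (\<lambda>B. A \<union> B) (uniform_subset (s - i) (X - T)))
      = map_pmf (\<lambda>(A, B). A \<union> B) (bind_pmf (uniform_subset i T) (\<lambda>A. map_pmf (Pair A) (uniform_subset (s - i) (X - T))))"
    by (simp add: map_bind_pmf pmf.map_comp o_def)
  also have "bind_pmf (uniform_subset i T) (\<lambda>A. map_pmf (Pair A) (uniform_subset (s - i) (X - T))) = pmf_of_set P"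
    unfolding uniform_subset_def P_def
    by (rule sigma_pmf[where c = "(n - t) choose (s - i)"])
       (use fT ne1 ne2 assms cXT in \<open>auto simp: subs_finite subs_card\<close>)
  also have "map_pmf (\<lambda>(A, B). A \<union> B) (pmf_of_set P) = pmf_of_set Q"
    using map_pmf_of_set_inj[OF inj neP fP] img by simp
  finally show "bind_pmf (uniform_subset i T) (\<lambda>A. map_pmf (\<lambda>B. A \<union> B) (uniform_subset (s - i) (X - T)))
     = pmf_of_set Q" .
  have "card Q = card P" using img card_image[OF inj] by simp
  also have "\<dots> = (t choose i) * ((n - t) choose (s - i))"
    unfolding P_def using fT assms cXT by (simp add: card_cartesian_product subs_card)
  finally show "card Q = (t choose i) * ((n - t) choose (s - i))" .
qed



lemma mixture:
  assumes "finite X" "card X = n" "s + t \<le> n" "T \<subseteq> X" "card T = t"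
  shows "bind_pmf (hypergeometric_pmf n t s) (\<lambda>i. bind_pmf (uniform_subset i T)
           (\<lambda>A. map_pmf (\<lambda>B. A \<union> B) (uniform_subset (s - i) (X - T)))) = uniform_subset s X"
proof (rule pmf_eqI)
  fix S
  define H where "H = hypergeometric_pmf n t s"
  define g where "g i = bind_pmf (uniform_subset i T) (\<lambda>A. map_pmf (\<lambda>B. A \<union> B) (uniform_subset (s - i) (X - T)))" for i
  define c where "c = 1 / real (n choose s)"
  have sn: "s \<le> n" "t \<le> n" using assms by auto
  have fT: "finite T" using assms finite_subset by blast
  have cXT: "card (X - T) = n - t" using assms card_Diff_subset[of T X] fT by simp
  have "pmf (bind_pmf H g) S = (\<integral>i. pmf (g i) S \<partial>measure_pmf H)" by (rule pmf_bind)
  also have "\<dots> = (\<Sum>i\<in>{..s}. pmf (g i) S * pmf H i)"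
  proof (rule integral_measure_pmf_real)
    fix i assume "i \<in> set_pmf H"
    then have "pmf H i \<noteq> 0" by (simp add: set_pmf_iff)
    then show "i \<in> {..s}" unfolding H_def using pmf_hyp[OF sn, of i] by (auto split: if_splits)
  qed simp
  also have "\<dots> = (\<Sum>i\<in>{..s}. if i = card (S \<inter> T) \<and> S \<subseteq> X \<and> card S = s then c else 0)"
  proof (rule sum.cong[OF refl])
    fix i assume "i \<in> {..s}"
    then have iS: "i \<le> s" by simp
    show "pmf (g i) S * pmf H i = (if i = card (S \<inter> T) \<and> S \<subseteq> X \<and> card S = s then c else 0)"
    proof (cases "i \<le> t \<and> s - i \<le> n - t")
      case True
      define Q where "Q = {S. S \<subseteq> X \<and> card (S \<inter> T) = i \<and> card (S - T) = s - i}"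
      have gi: "g i = pmf_of_set Q" and cQ: "card Q = (t choose i) * ((n - t) choose (s - i))"
        unfolding g_def Q_def using inner_pmf[OF assms(1,2,4,5)] True by auto
      have pos: "card Q > 0" using cQ True by simp
      have fQ: "finite Q" using pos card_gt_0_iff by blast
      have Qne: "Q \<noteq> {}" using pos by auto
      have pH: "pmf H i = real (card Q) * c"
        unfolding H_def c_def using pmf_hyp[OF sn, of i] iS cQ by simp
      have memQ: "S \<in> Q \<longleftrightarrow> (i = card (S \<inter> T) \<and> S \<subseteq> X \<and> card S = s)"
      proof
        assume "S \<in> Q"
        then have "S \<subseteq> X" "card (S \<inter> T) = i" "card (S - T) = s - i" unfolding Q_def by auto
        moreover have "finite S" using \<open>S \<subseteq> X\<close> assms finite_subset by blast
        ultimately show "i = card (S \<inter> T) \<and> S \<subseteq> X \<and> card S = s"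
          using card_split[of S T] iS by simp
      next
        assume h: "i = card (S \<inter> T) \<and> S \<subseteq> X \<and> card S = s"
        then have "finite S" using assms finite_subset by blast
        then have "card (S - T) = s - i" using card_split[of S T] h by simp
        then show "S \<in> Q" using h unfolding Q_def by simp
      qed
      show ?thesis using pos unfolding gi pH
        by (subst pmf_of_set[OF Qne fQ]) (auto simp: memQ indicator_def)
    next
      case False
      have "pmf H i = 0"
        unfolding H_def using pmf_hyp[OF sn, of i] False by auto
      moreover have "\<not> (i = card (S \<inter> T) \<and> S \<subseteq> X \<and> card S = s)"
      proof
        assume h: "i = card (S \<inter> T) \<and> S \<subseteq> X \<and> card S = s"
        then have fS: "finite S" using assms finite_subset by blast
        have "card (S \<inter> T) \<le> t" using card_mono[OF fT, of "S \<inter> T"] assms by auto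
        moreover have "card (S - T) \<le> n - t" using card_mono[of "X - T" "S - T"] h assms cXT by auto
        moreover have "card (S - T) = s - i" using card_split[OF fS, of T] h by simp
        ultimately show False using False h by simp
      qed
      ultimately show ?thesis by auto
    qed
  qed
  also have "\<dots> = (if S \<subseteq> X \<and> card S = s then c else 0)"
  proof (cases "S \<subseteq> X \<and> card S = s")
    case True
    then have "finite S" using assms finite_subset by blast
    then have "card (S \<inter> T) \<le> s" using True card_mono[of S "S \<inter> T"] by auto
    then show ?thesis using True by (simp add: sum.delta')
  next
    case False
    have "(\<lambda>i. if i = card (S \<inter> T) \<and> S \<subseteq> X \<and> card S = s then c else 0) = (\<lambda>i. 0)"
      using False by (auto simp add: fun_eq_iff)
    then show ?thesis using False by (simp only:) simp
  qed
  also have "\<dots> = pmf (uniform_subset s X) S"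
    unfolding uniform_subset_def c_def using assms subs_ne[of X s]
    by (subst pmf_of_set) (auto simp: subs_finite subs_card indicator_def)
  finally show "pmf (bind_pmf H g) S = pmf (uniform_subset s X) S" .
qed



lemma sample_eq:
  fixes X :: "'a set"
  assumes "finite X" "card X = n" "s + t \<le> n"
  shows "sample_TS X t s = pair_pmf (uniform_subset t X) (uniform_subset s X)"
proof -
  define H where "H = hypergeometric_pmf (card X) t s"
  define R :: "'a set \<Rightarrow> 'a set \<Rightarrow> ('a set \<times> 'a set) pmf" where "R L T = bind_pmf H (\<lambda>i. bind_pmf (uniform_subset i T) (\<lambda>A.
      bind_pmf (uniform_subset (s - i) (L - T)) (\<lambda>B. return_pmf (T, A \<union> B))))" for L T
  have "sample_TS X t s = bind_pmf (uniform_subset (t+s) X) (\<lambda>L. bind_pmf (uniform_subset t L) (\<lambda>T. R L T))"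
    unfolding sample_TS_def R_def H_def by simp
  also have "\<dots> = bind_pmf (bind_pmf (uniform_subset (t+s) X) (\<lambda>L. map_pmf (Pair L) (uniform_subset t L))) (\<lambda>(L,T). R L T)"
    by (simp add: bind_assoc_pmf bind_map_pmf)
  also have "\<dots> = bind_pmf (uniform_subset t X) (\<lambda>T. bind_pmf (uniform_subset s (X - T)) (\<lambda>Q. R (T \<union> Q) T))"
    unfolding pairs[OF assms] by (simp add: bind_assoc_pmf bind_map_pmf map_bind_pmf)
  also have "\<dots> = bind_pmf (uniform_subset t X) (\<lambda>T. map_pmf (Pair T) (uniform_subset s X))"
  proof (rule bind_pmf_cong[OF refl])
    fix T assume "T \<in> set_pmf (uniform_subset t X)"
    then have T: "T \<subseteq> X" "card T = t"
      unfolding uniform_subset_def using assms subs_ne[of X t] by (auto simp: subs_finite)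
    have fT: "finite T" using T assms finite_subset by blast
    have cXT: "card (X - T) = n - t" using assms T card_Diff_subset[of T X] fT by simp
    have "bind_pmf (uniform_subset s (X - T)) (\<lambda>Q. R (T \<union> Q) T)
        = bind_pmf (uniform_subset s (X - T)) (\<lambda>Q. bind_pmf H (\<lambda>i. bind_pmf (uniform_subset i T) (\<lambda>A.
             bind_pmf (uniform_subset (s - i) Q) (\<lambda>B. return_pmf (T, A \<union> B)))))"
    proof (rule bind_pmf_cong[OF refl])
      fix Q assume "Q \<in> set_pmf (uniform_subset s (X - T))"
      then have "Q \<subseteq> X - T"
        unfolding uniform_subset_def using assms cXT subs_ne[of "X - T" s] by (auto simp: subs_finite)
      then have "(T \<union> Q) - T = Q" by auto
      then show "R (T \<union> Q) T = bind_pmf H (\<lambda>i. bind_pmf (uniform_subset i T) (\<lambda>A.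
             bind_pmf (uniform_subset (s - i) Q) (\<lambda>B. return_pmf (T, A \<union> B))))"
        unfolding R_def by simp
    qed
    also have "\<dots> = bind_pmf H (\<lambda>i. bind_pmf (uniform_subset s (X - T)) (\<lambda>Q. bind_pmf (uniform_subset i T) (\<lambda>A.
             bind_pmf (uniform_subset (s - i) Q) (\<lambda>B. return_pmf (T, A \<union> B)))))"
      by (rule bind_commute_pmf)
    also have "\<dots> = bind_pmf H (\<lambda>i. bind_pmf (uniform_subset i T) (\<lambda>A. bind_pmf (uniform_subset s (X - T)) (\<lambda>Q.
             bind_pmf (uniform_subset (s - i) Q) (\<lambda>B. return_pmf (T, A \<union> B)))))"
      by (rule bind_pmf_cong[OF refl], rule bind_commute_pmf)
    also have "\<dots> = bind_pmf H (\<lambda>i. bind_pmf (uniform_subset i T) (\<lambda>A.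
             bind_pmf (uniform_subset (s - i) (X - T)) (\<lambda>B. return_pmf (T, A \<union> B))))"
    proof (intro bind_pmf_cong[OF refl])
      fix i A
      have "bind_pmf (uniform_subset s (X - T)) (\<lambda>Q. bind_pmf (uniform_subset (s - i) Q) (\<lambda>B. return_pmf (T, A \<union> B)))
          = bind_pmf (bind_pmf (uniform_subset s (X - T)) (\<lambda>Q. uniform_subset (s - i) Q)) (\<lambda>B. return_pmf (T, A \<union> B))"
        by (simp add: bind_assoc_pmf)
      also have "bind_pmf (uniform_subset s (X - T)) (\<lambda>Q. uniform_subset (s - i) Q) = uniform_subset (s - i) (X - T)"
        by (rule two_stage) (use assms cXT in auto)
      finally show "bind_pmf (uniform_subset s (X - T)) (\<lambda>Q. bind_pmf (uniform_subset (s - i) Q) (\<lambda>B. return_pmf (T, A \<union> B)))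
          = bind_pmf (uniform_subset (s - i) (X - T)) (\<lambda>B. return_pmf (T, A \<union> B))" .
    qed
    also have "\<dots> = map_pmf (Pair T) (bind_pmf H (\<lambda>i. bind_pmf (uniform_subset i T)
           (\<lambda>A. map_pmf (\<lambda>B. A \<union> B) (uniform_subset (s - i) (X - T)))))"
      by (simp add: map_pmf_def bind_assoc_pmf bind_return_pmf)
    also have "\<dots> = map_pmf (Pair T) (uniform_subset s X)"
      unfolding H_def using mixture[OF assms(1,2,3) T] assms(2) by simp
    finally show "bind_pmf (uniform_subset s (X - T)) (\<lambda>Q. R (T \<union> Q) T) = map_pmf (Pair T) (uniform_subset s X)" .
  qed
  also have "\<dots> = pair_pmf (uniform_subset t X) (uniform_subset s X)"
    by (simp add: pair_pmf_def map_pmf_def)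
  finally show ?thesis .
qed

theorem mainTheorem8:
  fixes X :: "'a set" and n s t :: nat
  assumes "finite X" and "card X = n" and "s + t \<le> n"
  shows "(\<forall>T. T \<subseteq> X \<and> card T = t \<longrightarrow>
            measure_pmf.prob (sample_TS X t s) {p. fst p = T} = 1 / real (n choose t))
       \<and> (\<forall>T S. T \<subseteq> X \<and> card T = t \<and> S \<subseteq> X \<and> card S = s \<longrightarrow>
            measure_pmf.prob (sample_TS X t s) {(T, S)}
              / measure_pmf.prob (sample_TS X t s) {p. fst p = T} = 1 / real (n choose s))
       \<and> sample_TS X t s = pair_pmf (uniform_subset t X) (uniform_subset s X)"
proof -
  have eq: "sample_TS X t s = pair_pmf (uniform_subset t X) (uniform_subset s X)"
    by (rule sample_eq[OF assms])
  have pU: "pmf (uniform_subset k X) B = 1 / real (n choose k)" if "B \<subseteq> X" "card B = k" for k B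
  proof -
    have "subs k X \<noteq> {}" using that by auto
    then show ?thesis unfolding uniform_subset_def using assms that
      by (subst pmf_of_set) (auto simp: subs_finite subs_card)
  qed
  have fstp: "measure_pmf.prob (sample_TS X t s) {p. fst p = T} = pmf (uniform_subset t X) T" for T
  proof -
    have "measure_pmf.prob (sample_TS X t s) {p. fst p = T}
        = measure_pmf.prob (map_pmf fst (pair_pmf (uniform_subset t X) (uniform_subset s X))) {T}"
      unfolding eq by (simp add: vimage_def)
    then show ?thesis by (simp only: map_fst_pair_pmf measure_pmf_single)
  qed
  have A: "\<forall>T. T \<subseteq> X \<and> card T = t \<longrightarrow>
            measure_pmf.prob (sample_TS X t s) {p. fst p = T} = 1 / real (n choose t)"
    using fstp pU by auto
  have B: "\<forall>T S. T \<subseteq> X \<and> card T = t \<and> S \<subseteq> X \<and> card S = s \<longrightarrow>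
            measure_pmf.prob (sample_TS X t s) {(T, S)}
              / measure_pmf.prob (sample_TS X t s) {p. fst p = T} = 1 / real (n choose s)"
  proof (intro allI impI)
    fix T S assume h: "T \<subseteq> X \<and> card T = t \<and> S \<subseteq> X \<and> card S = s"
    have pos: "real (n choose t) > 0" using assms by simp
    have "measure_pmf.prob (sample_TS X t s) {(T, S)} = pmf (uniform_subset t X) T * pmf (uniform_subset s X) S"
      unfolding eq measure_pmf_single pmf_pair ..
    then show "measure_pmf.prob (sample_TS X t s) {(T, S)}
              / measure_pmf.prob (sample_TS X t s) {p. fst p = T} = 1 / real (n choose s)"
      using fstp[of T] pU h pos by simp
  qed
  show ?thesis using A B eq by blast
qed


end
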